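(* Let $A$ be a monotonic modal algebra and let $S$ be a countable subset of $\mathcal{P}(A)$. Let $J_S(A)=\langle Q_S(A),\mathcal{V}_A\rangle$, where for each $F\in Q_S(A)$ $$\mathcal{V}_A(F)=\mathord{\uparrow}\bigl\{\{G\in Q_S(A)\mid x\in G\}\;\bigm|\; x\in A,\ \Box x\in F\bigr\},$$ the upward closure being taken in $\mathcal{P}(Q_S(A))$ ordered by inclusion. Then $J_S(A)$ is a monotonic neighborhood frame. Moreover, if $A$ is topped then $J_S(A)$ is topped, and if $A$ is cufi then $J_S(A)$ is cufi.
   Context: A modal algebra is a structure $\langle A;\lor,\land,-,\Box,0,1\rangle$ whose reduct $\langle A;\lor,\land,-,0,1\rangle$ is a Boolean algebra and $\Box$ is an arbitrary unary operation on $A$. It is monotonic if $\Box(x\land y)\le \Box x\land\Box y$ for all $x,y$ (equivalently $x\le y\Rightarrow \Box x\le\Box y$); topped if $\Box 1=1$; cufi if $\Box x\land\Box y\le\Box(x\land y)$ for all $x,y$. A prime filter of a Boolean algebra is a proper filter $F$ ($0\notin F$) such that $x\lor y\in F$ implies $x\in F$ or $y\in F$. For $S\subseteq\mathcal{P}(A)$, a Q-filter for $S$ is a prime filter $F$ such that for every $X\in S$: if the meet $\bigwedge X$ exists in $A$ and $X\subseteq F$, then $\bigwedge X\in F$. $Q_S(A)$ denotes the set of all Q-filters for $S$. A neighborhood frame is a pair $\langle C,\mathcal{V}\rangle$ with $C$ a non-empty set and $\mathcal{V}:C\to\mathcal{P}(\mathcal{P}(C))$. It is monotonic if for every $c\in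 C$, $\mathcal{V}(c)$ is upward closed under $\subseteq$ in $\mathcal{P}(C)$; topped if $C\in\mathcal{V}(c)$ for every $c$; cufi (closed under finite intersections) if for every $c$ and every non-empty finite $T\subseteq\mathcal{V}(c)$, $\bigcap T\in\mathcal{V}(c)$. *)

theory Defs
  imports Main "HOL-Library.Countable_Set"
begin

text \<open>Modal algebras: a Boolean algebra (type class boolean_algebra on type 'a, the whole
  type being the carrier A) together with an arbitrary unary operation box.\<close>

definition monotonic_ma :: "('a::boolean_algebra \<Rightarrow> 'a) \<Rightarrow> bool" where
  "monotonic_ma box \<longleftrightarrow> (\<forall>x y. box (inf x y) \<le> inf (box x) (box y))"

definition topped_ma :: "('a::boolean_algebra \<Rightarrow> 'a) \<Rightarrow> bool" where
  "topped_ma box \<longleftrightarrow> box top = top"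

definition cufi_ma :: "('a::boolean_algebra \<Rightarrow> 'a) \<Rightarrow> bool" where
  "cufi_ma box \<longleftrightarrow> (\<forall>x y. inf (box x) (box y) \<le> box (inf x y))"

definition is_filter :: "'a::boolean_algebra set \<Rightarrow> bool" where
  "is_filter F \<longleftrightarrow> F \<noteq> {} \<and> (\<forall>x y. x \<in> F \<and> x \<le> y \<longrightarrow> y \<in> F)
     \<and> (\<forall>x y. x \<in> F \<and> y \<in> F \<longrightarrow> inf x y \<in> F)"

definition prime_filter :: "'a::boolean_algebra set \<Rightarrow> bool" where
  "prime_filter F \<longleftrightarrow> is_filter F \<and> bot \<notin> F \<and> (\<forall>x y. sup x y \<in> F \<longrightarrow> x \<in> F \<or> y \<in> F)"

definition is_meet :: "'a::boolean_algebra set \<Rightarrow> 'a \<Rightarrow> bool" where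
  "is_meet X m \<longleftrightarrow> (\<forall>x\<in>X. m \<le> x) \<and> (\<forall>y. (\<forall>x\<in>X. y \<le> x) \<longrightarrow> y \<le> m)"

definition Q_filter :: "'a::boolean_algebra set set \<Rightarrow> 'a set \<Rightarrow> bool" where
  "Q_filter S F \<longleftrightarrow> prime_filter F \<and>
     (\<forall>X\<in>S. \<forall>m. is_meet X m \<and> X \<subseteq> F \<longrightarrow> m \<in> F)"

definition Q_S :: "'a::boolean_algebra set set \<Rightarrow> 'a set set" where
  "Q_S S = {F. Q_filter S F}"

definition V_A :: "('a::boolean_algebra \<Rightarrow> 'a) \<Rightarrow> 'a set set \<Rightarrow> 'a set \<Rightarrow> 'a set set set" where
  "V_A box S F = {U. U \<subseteq> Q_S S \<and> (\<exists>x. box x \<in> F \<and> {G \<in> Q_S S. x \<in> G} \<subseteq> U)}"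

definition nbhd_frame :: "'c set \<Rightarrow> ('c \<Rightarrow> 'c set set) \<Rightarrow> bool" where
  "nbhd_frame C V \<longleftrightarrow> C \<noteq> {} \<and> (\<forall>c\<in>C. V c \<subseteq> Pow C)"

definition monotonic_frame :: "'c set \<Rightarrow> ('c \<Rightarrow> 'c set set) \<Rightarrow> bool" where
  "monotonic_frame C V \<longleftrightarrow> nbhd_frame C V \<and>
     (\<forall>c\<in>C. \<forall>U\<in>V c. \<forall>W. U \<subseteq> W \<and> W \<subseteq> C \<longrightarrow> W \<in> V c)"

definition topped_frame :: "'c set \<Rightarrow> ('c \<Rightarrow> 'c set set) \<Rightarrow> bool" where
  "topped_frame C V \<longleftrightarrow> nbhd_frame C V \<and> (\<forall>c\<in>C. C \<in> V c)"

definition cufi_frame :: "'c set \<Rightarrow> ('c \<Rightarrow> 'c set set) \<Rightarrow> bool" where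
  "cufi_frame C V \<longleftrightarrow> nbhd_frame C V \<and>
     (\<forall>c\<in>C. \<forall>T. finite T \<and> T \<noteq> {} \<and> T \<subseteq> V c \<longrightarrow> \<Inter>T \<in> V c)"

end

theory Submission
  imports Defs
begin

fun seqa :: "(nat \<Rightarrow> 'a::boolean_algebra set) \<Rightarrow> nat \<Rightarrow> 'a" where
  "seqa X 0 = top"
| "seqa X (Suc n) = (if \<exists>x\<in>X n. inf (seqa X n) (- x) \<noteq> bot
     then inf (seqa X n) (- (SOME x. x \<in> X n \<and> inf (seqa X n) (- x) \<noteq> bot)) else seqa X n)"

lemma seqa_nz:
  assumes "(bot::'a::boolean_algebra) \<noteq> top"
  shows "seqa (X::nat \<Rightarrow> 'a set) n \<noteq> bot"
proof (induction n)
  case 0 then show ?case using assms by simp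
next
  case (Suc n)
  show ?case
  proof (cases "\<exists>x\<in>X n. inf (seqa X n) (- x) \<noteq> bot")
    case True
    then have "(SOME x. x \<in> X n \<and> inf (seqa X n) (- x) \<noteq> bot) \<in> X n \<and>
       inf (seqa X n) (- (SOME x. x \<in> X n \<and> inf (seqa X n) (- x) \<noteq> bot)) \<noteq> bot"
      by (metis (mono_tags, lifting) someI_ex)
    then show ?thesis using True by simp
  next
    case False then show ?thesis using Suc by simp
  qed
qed

lemma seqa_Suc_le: "seqa X (Suc n) \<le> seqa X n"
  by simp

lemma seqa_antimono: "m \<le> n \<Longrightarrow> seqa X n \<le> seqa X m"
proof (induction n rule: dec_induct)
  case base then show ?case by simp
next
  case (step k) then show ?case using seqa_Suc_le[of X k] by (meson order_trans)
qed

lemma seqa_key: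
  "(\<forall>x\<in>X n. seqa X n \<le> x) \<or> (\<exists>x\<in>X n. seqa X (Suc n) \<le> - x)"
proof (cases "\<exists>x\<in>X n. inf (seqa X n) (- x) \<noteq> bot")
  case True
  then have "(SOME x. x \<in> X n \<and> inf (seqa X n) (- x) \<noteq> bot) \<in> X n"
    by (metis (mono_tags, lifting) someI_ex)
  moreover have "seqa X (Suc n) \<le> - (SOME x. x \<in> X n \<and> inf (seqa X n) (- x) \<noteq> bot)"
    using True by simp
  ultimately show ?thesis by blast
next
  case False
  then have "\<forall>x\<in>X n. seqa X n \<le> x"
    by (simp add: inf_shunt)
  then show ?thesis by blast
qed

lemma filter_top: "is_filter F \<Longrightarrow> top \<in> F"
  unfolding is_filter_def by auto

lemma bool_lemma:
  fixes f g x y :: "'a::boolean_algebra"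
  assumes "inf f x = bot" "inf g y = bot"
  shows "inf (inf f g) (sup x y) = bot"
proof -
  have "inf (inf f g) (sup x y) = sup (inf (inf f g) x) (inf (inf f g) y)"
    by (simp add: inf_sup_distrib1)
  also have "inf (inf f g) x = inf g (inf f x)" by (simp add: ac_simps)
  also have "\<dots> = bot" using assms(1) by simp
  also have "inf (inf f g) y = inf f (inf g y)" by (simp add: ac_simps)
  also have "\<dots> = bot" using assms(2) by simp
  finally show ?thesis by simp
qed

lemma ext_filter:
  assumes "is_filter (M::'a::boolean_algebra set)"
  shows "is_filter {z. \<exists>f\<in>M. inf f x \<le> z}" and "M \<subseteq> {z. \<exists>f\<in>M. inf f x \<le> z}"
    and "x \<in> {z. \<exists>f\<in>M. inf f x \<le> z}"
proof -
  have t: "top \<in> M" using filter_top[OF assms] .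
  show "is_filter {z. \<exists>f\<in>M. inf f x \<le> z}"
    unfolding is_filter_def
  proof (intro conjI allI impI)
    show "{z. \<exists>f\<in>M. inf f x \<le> z} \<noteq> {}" using t by auto
  next
    fix a b assume "a \<in> {z. \<exists>f\<in>M. inf f x \<le> z} \<and> a \<le> b"
    then show "b \<in> {z. \<exists>f\<in>M. inf f x \<le> z}" using order_trans by blast
  next
    fix a b assume "a \<in> {z. \<exists>f\<in>M. inf f x \<le> z} \<and> b \<in> {z. \<exists>f\<in>M. inf f x \<le> z}"
    then obtain f g where fg: "f \<in> M" "g \<in> M" "inf f x \<le> a" "inf g x \<le> b" by auto
    have m: "inf f g \<in> M" using fg assms unfolding is_filter_def by blast
    have 1: "inf (inf f g) x \<le> inf f x" by (rule inf_mono) simp_all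
    have 2: "inf (inf f g) x \<le> inf g x" by (rule inf_mono) simp_all
    have "inf (inf f g) x \<le> inf a b"
      using order_trans[OF 1 fg(3)] order_trans[OF 2 fg(4)] by simp
    then show "inf a b \<in> {z. \<exists>f\<in>M. inf f x \<le> z}" using m by blast
  qed
  show "M \<subseteq> {z. \<exists>f\<in>M. inf f x \<le> z}" by (auto intro: inf.coboundedI1)
  show "x \<in> {z. \<exists>f\<in>M. inf f x \<le> z}" using t by auto
qed

lemma prime_ext:
  assumes "is_filter (F0::'a::boolean_algebra set)" "bot \<notin> F0"
  shows "\<exists>F. prime_filter F \<and> F0 \<subseteq> F"
proof -
  define A where "A = {F. is_filter F \<and> bot \<notin> F \<and> F0 \<subseteq> (F::'a set)}"
  have "\<forall>C\<in>chains A. \<exists>U\<in>A. \<forall>X\<in>C. X \<subseteq> U"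
  proof
    fix C assume C: "C \<in> chains A"
    show "\<exists>U\<in>A. \<forall>X\<in>C. X \<subseteq> U"
    proof (cases "C = {}")
      case True then show ?thesis using assms unfolding A_def by auto
    next
      case False
      have CA: "C \<subseteq> A" and ch: "\<forall>X\<in>C. \<forall>Y\<in>C. X \<subseteq> Y \<or> Y \<subseteq> X"
        using C unfolding chains_def chain_subset_def by auto
      have "is_filter (\<Union>C)"
        unfolding is_filter_def
      proof (intro conjI allI impI)
        obtain X where "X \<in> C" using False by auto
        then have "X \<noteq> {}" using CA unfolding A_def is_filter_def by auto
        then show "\<Union>C \<noteq> {}" using \<open>X \<in> C\<close> by auto
      next
        fix x y assume "x \<in> \<Union>C \<and> x \<le> y"
        then obtain X where "X \<in> C" "x \<in> X" "x \<le> y" by auto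
        then show "y \<in> \<Union>C" using CA unfolding A_def is_filter_def by blast
      next
        fix x y assume "x \<in> \<Union>C \<and> y \<in> \<Union>C"
        then obtain X Y where XY: "X \<in> C" "x \<in> X" "Y \<in> C" "y \<in> Y" by auto
        show "inf x y \<in> \<Union>C"
        proof (cases "X \<subseteq> Y")
          case True
          then have "inf x y \<in> Y" using XY CA unfolding A_def is_filter_def by blast
          then show ?thesis using XY by auto
        next
          case False
          then have "Y \<subseteq> X" using ch XY by blast
          then have "inf x y \<in> X" using XY CA unfolding A_def is_filter_def by blast
          then show ?thesis using XY by auto
        qed
      qed
      moreover have "bot \<notin> \<Union>C" using CA unfolding A_def by auto
      moreover have "F0 \<subseteq> \<Union>C" using CA False unfolding A_def by auto
      ultimately show ?thesis unfolding A_def by blast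
    qed
  qed
  from Zorn_Lemma2[OF this] obtain M where MA: "M \<in> A" and max: "\<forall>X\<in>A. M \<subseteq> X \<longrightarrow> X = M"
    by blast
  have fM: "is_filter M" "bot \<notin> M" "F0 \<subseteq> M" using MA unfolding A_def by auto
  have ext: "\<exists>f\<in>M. inf f x = bot" if "x \<notin> M" for x
  proof (rule ccontr)
    assume nb: "\<not> (\<exists>f\<in>M. inf f x = bot)"
    let ?M = "{z. \<exists>f\<in>M. inf f x \<le> z}"
    have "bot \<notin> ?M" using nb by (auto simp: bot_unique)
    then have "?M \<in> A" using ext_filter[OF fM(1), of x] fM unfolding A_def by auto
    then have "?M = M" using max ext_filter(2)[OF fM(1), of x] by blast
    then show False using ext_filter(3)[OF fM(1), of x] that by blast
  qed
  have "prime_filter M"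
    unfolding prime_filter_def
  proof (intro conjI allI impI fM)
    fix x y assume s: "sup x y \<in> M"
    show "x \<in> M \<or> y \<in> M"
    proof (rule ccontr)
      assume "\<not> (x \<in> M \<or> y \<in> M)"
      then obtain f g where "f \<in> M" "g \<in> M" "inf f x = bot" "inf g y = bot"
        using ext by blast
      then have "inf (inf f g) (sup x y) \<in> M" "inf (inf f g) (sup x y) = bot"
        using fM(1) s bool_lemma unfolding is_filter_def by blast+
      then show False using fM(2) by simp
    qed
  qed
  then show ?thesis using fM by blast
qed

lemma Q_nonempty:
  assumes "(bot::'a::boolean_algebra) \<noteq> top" "countable (S::'a set set)"
  shows "Q_S S \<noteq> {}"
proof -
  define X where "X = from_nat_into S"
  define F0 where "F0 = {y. \<exists>n. seqa X n \<le> y}"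
  have "is_filter F0"
    unfolding is_filter_def F0_def
  proof (intro conjI allI impI)
    show "{y. \<exists>n. seqa X n \<le> y} \<noteq> {}" by auto
  next
    fix x y assume "x \<in> {y. \<exists>n. seqa X n \<le> y} \<and> x \<le> y"
    then show "y \<in> {y. \<exists>n. seqa X n \<le> y}" using order_trans by blast
  next
    fix x y assume "x \<in> {y. \<exists>n. seqa X n \<le> y} \<and> y \<in> {y. \<exists>n. seqa X n \<le> y}"
    then obtain m n where "seqa X m \<le> x" "seqa X n \<le> y" by auto
    then have "seqa X (max m n) \<le> x" "seqa X (max m n) \<le> y"
      using seqa_antimono[of m "max m n" X] seqa_antimono[of n "max m n" X] by auto
    then show "inf x y \<in> {y. \<exists>n. seqa X n \<le> y}" by auto
  qed
  moreover have "bot \<notin> F0" unfolding F0_def using seqa_nz[OF assms(1)] bot_unique by auto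
  ultimately obtain F where F: "prime_filter F" "F0 \<subseteq> F" using prime_ext by blast
  have fF: "is_filter F" "bot \<notin> F" using F unfolding prime_filter_def by auto
  have an: "seqa X n \<in> F" for n using F(2) unfolding F0_def by auto
  have "Q_filter S F"
    unfolding Q_filter_def
  proof (intro conjI F(1) ballI allI impI)
    fix Y m assume Y: "Y \<in> S" and h: "is_meet Y m \<and> Y \<subseteq> F"
    obtain n where n: "Y = X n" using subset_range_from_nat_into[OF assms(2)] Y unfolding X_def by auto
    from seqa_key[of X n] show "m \<in> F"
    proof
      assume "\<forall>x\<in>X n. seqa X n \<le> x"
      then have "seqa X n \<le> m" using h n unfolding is_meet_def by auto
      then show ?thesis using an[of n] fF unfolding is_filter_def by blast
    next
      assume "\<exists>x\<in>X n. seqa X (Suc n) \<le> - x"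
      then obtain x where x: "x \<in> X n" "seqa X (Suc n) \<le> - x" by auto
      have "- x \<in> F" using x an[of "Suc n"] fF unfolding is_filter_def by blast
      moreover have "x \<in> F" using x h n by auto
      ultimately have "inf x (- x) \<in> F" using fF unfolding is_filter_def by blast
      then show ?thesis using fF by simp
    qed
  qed
  then show ?thesis unfolding Q_S_def by auto
qed

theorem mainTheorem1:
  fixes box :: "'a::boolean_algebra \<Rightarrow> 'a" and S :: "'a set set"
  assumes nontrivial: "(bot::'a) \<noteq> top"
    and mono: "monotonic_ma box"
    and cnt: "countable S"
  shows "monotonic_frame (Q_S S) (V_A box S)
    \<and> (topped_ma box \<longrightarrow> topped_frame (Q_S S) (V_A box S))
    \<and> (cufi_ma box \<longrightarrow> cufi_frame (Q_S S) (V_A box S))"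
proof -
  have nf: "nbhd_frame (Q_S S) (V_A box S)"
    unfolding nbhd_frame_def using Q_nonempty[OF nontrivial cnt] by (auto simp: V_A_def)
  have filt: "is_filter G" if "G \<in> Q_S S" for G
    using that unfolding Q_S_def Q_filter_def prime_filter_def by auto
  have m: "monotonic_frame (Q_S S) (V_A box S)"
    unfolding monotonic_frame_def using nf by (auto simp: V_A_def)
  have t: "topped_ma box \<longrightarrow> topped_frame (Q_S S) (V_A box S)"
  proof
    assume "topped_ma box"
    then have bt: "box top = top" unfolding topped_ma_def .
    show "topped_frame (Q_S S) (V_A box S)"
      unfolding topped_frame_def
    proof (intro conjI nf ballI)
      fix c assume "c \<in> Q_S S"
      then have "box top \<in> c" using filt filter_top bt by metis
      then show "Q_S S \<in> V_A box S c" unfolding V_A_def by auto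
    qed
  qed
  have c: "cufi_ma box \<longrightarrow> cufi_frame (Q_S S) (V_A box S)"
  proof
    assume cu: "cufi_ma box"
    have "\<Inter>T \<in> V_A box S c" if c: "c \<in> Q_S S" and T: "finite T" "T \<noteq> {}" "T \<subseteq> V_A box S c" for c T
      using T
    proof (induction T rule: finite_ne_induct)
      case (singleton U) then show ?case by simp
    next
      case (insert U T)
      have "\<Inter>T \<in> V_A box S c" using insert by auto
      then obtain y where y: "\<Inter>T \<subseteq> Q_S S" "box y \<in> c" "{G \<in> Q_S S. y \<in> G} \<subseteq> \<Inter>T"
        unfolding V_A_def by auto
      have "U \<in> V_A box S c" using insert by auto
      then obtain x where x: "U \<subseteq> Q_S S" "box x \<in> c" "{G \<in> Q_S S. x \<in> G} \<subseteq> U"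
        unfolding V_A_def by auto
      have fc: "is_filter c" using filt c .
      have "inf (box x) (box y) \<in> c" using x y fc unfolding is_filter_def by blast
      then have bxy: "box (inf x y) \<in> c" using cu fc unfolding cufi_ma_def is_filter_def by blast
      have "{G \<in> Q_S S. inf x y \<in> G} \<subseteq> U \<inter> \<Inter>T"
      proof
        fix G assume G: "G \<in> {G \<in> Q_S S. inf x y \<in> G}"
        then have "is_filter G" using filt by auto
        moreover have "inf x y \<in> G" "inf x y \<le> x" "inf x y \<le> y" using G by auto
        ultimately have "x \<in> G" "y \<in> G" unfolding is_filter_def by blast+
        then show "G \<in> U \<inter> \<Inter>T" using G x y by blast
      qed
      then show ?case unfolding V_A_def using x bxy by auto
    qed
    then show "cufi_frame (Q_S S) (V_A box S)" unfolding cufi_frame_def using nf by blast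
  qed
  show ?thesis using m t c by blast
qed

end
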